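(* Let $G$ be a graph and $U \subseteq V(G)$. Suppose $G$ has a minor with countable branch sets which is a barricade with bipartition $(A,B)$ such that for every $b\in B$ the branch set of $b$ contains a vertex of $U$. Then $G$ has a $U$-rooted minor with countable branch sets that is a barricade.
   Context: A barricade is a bipartite graph with bipartition $(A,B)$ such that $|A|<|B|$ and every vertex of $B$ has infinitely many neighbours in $A$. Minors are given by disjoint connected branch sets; a minor is $U$-rooted if every branch set contains a vertex of $U$. *)

theory Defs
  imports Main "HOL-Library.Countable_Set"
begin

definition graph :: "'a set \<Rightarrow> ('a \<Rightarrow> 'a \<Rightarrow> bool) \<Rightarrow> bool" where
  "graph V E \<longleftrightarrow> (\<forall>u v. E u v \<longrightarrow> u \<in> V \<and> v \<in> V \<and> u \<noteq> v \<and> E v u)"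

definition connected_set :: "('a \<Rightarrow> 'a \<Rightarrow> bool) \<Rightarrow> 'a set \<Rightarrow> bool" where
  "connected_set E X \<longleftrightarrow> X \<noteq> {} \<and>
     (\<forall>x\<in>X. \<forall>y\<in>X. (\<lambda>u v. u \<in> X \<and> v \<in> X \<and> E u v)\<^sup>*\<^sup>* x y)"

definition minor_model ::
  "'a set \<Rightarrow> ('a \<Rightarrow> 'a \<Rightarrow> bool) \<Rightarrow> 'b set \<Rightarrow> ('b \<Rightarrow> 'b \<Rightarrow> bool) \<Rightarrow> ('b \<Rightarrow> 'a set) \<Rightarrow> bool" where
  "minor_model V E HV HE \<beta> \<longleftrightarrow> graph HV HE \<and>
     (\<forall>h\<in>HV. \<beta> h \<subseteq> V \<and> connected_set E (\<beta> h)) \<and>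
     (\<forall>h\<in>HV. \<forall>h'\<in>HV. h \<noteq> h' \<longrightarrow> \<beta> h \<inter> \<beta> h' = {}) \<and>
     (\<forall>h h'. HE h h' \<longrightarrow> (\<exists>x\<in>\<beta> h. \<exists>y\<in>\<beta> h'. E x y))"

definition barricade :: "'b set \<Rightarrow> ('b \<Rightarrow> 'b \<Rightarrow> bool) \<Rightarrow> 'b set \<Rightarrow> 'b set \<Rightarrow> bool" where
  "barricade HV HE A B \<longleftrightarrow> graph HV HE \<and>
     A \<union> B = HV \<and> A \<inter> B = {} \<and>
     (\<forall>u v. HE u v \<longrightarrow> (u \<in> A \<and> v \<in> B) \<or> (u \<in> B \<and> v \<in> A)) \<and>
     (card_of A, card_of B) \<in> ordLess \<and>
     (\<forall>b\<in>B. infinite {a\<in>A. HE b a})"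

end

theory Submission
  imports Defs
begin

unbundle cardinal_syntax

lemma conn_union:
  assumes "connected_set E X" "connected_set E Y" "x \<in> X" "y \<in> Y" "E x y" "E y x"
  shows "connected_set E (X \<union> Y)"
proof -
  let ?R = "\<lambda>S u v. u \<in> S \<and> v \<in> S \<and> E u v"
  have mX: "(?R X)\<^sup>*\<^sup>* \<le> (?R (X \<union> Y))\<^sup>*\<^sup>*" by (rule rtranclp_mono) auto
  have mY: "(?R Y)\<^sup>*\<^sup>* \<le> (?R (X \<union> Y))\<^sup>*\<^sup>*" by (rule rtranclp_mono) auto
  have pX: "(?R (X \<union> Y))\<^sup>*\<^sup>* u v" if "u \<in> X" "v \<in> X" for u v
    using assms(1) that mX unfolding connected_set_def by blast
  have pY: "(?R (X \<union> Y))\<^sup>*\<^sup>* u v" if "u \<in> Y" "v \<in> Y" for u v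
    using assms(2) that mY unfolding connected_set_def by blast
  have exy: "(?R (X \<union> Y))\<^sup>*\<^sup>* x y" "(?R (X \<union> Y))\<^sup>*\<^sup>* y x"
    using assms(3-6) by (auto intro: r_into_rtranclp)
  show ?thesis unfolding connected_set_def
  proof (intro conjI ballI)
    show "X \<union> Y \<noteq> {}" using assms(3) by blast
  next
    fix u v assume "u \<in> X \<union> Y" "v \<in> X \<union> Y"
    then show "(?R (X \<union> Y))\<^sup>*\<^sup>* u v"
      using pX pY exy assms(3,4) by (meson Un_iff rtranclp_trans)
  qed
qed

theorem lemma5p3:
  fixes V :: "'a set" and E :: "'a \<Rightarrow> 'a \<Rightarrow> bool" and U :: "'a set"
    and HV :: "'b set" and HE :: "'b \<Rightarrow> 'b \<Rightarrow> bool" and \<beta> :: "'b \<Rightarrow> 'a set"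
    and A B :: "'b set"
  assumes "graph V E" and "U \<subseteq> V"
    and "minor_model V E HV HE \<beta>"
    and "\<forall>h\<in>HV. countable (\<beta> h)"
    and "barricade HV HE A B"
    and "\<forall>b\<in>B. \<beta> b \<inter> U \<noteq> {}"
  shows "\<exists>(HV' :: 'a set set) HE' \<beta>'. minor_model V E HV' HE' \<beta>' \<and>
           (\<forall>h\<in>HV'. countable (\<beta>' h)) \<and>
           (\<forall>h\<in>HV'. \<beta>' h \<inter> U \<noteq> {}) \<and>
           (\<exists>A' B'. barricade HV' HE' A' B')"
proof -
  have Egr: "\<And>u v. E u v \<Longrightarrow> u \<in> V \<and> v \<in> V \<and> u \<noteq> v \<and> E v u"
    using assms(1) unfolding graph_def by blast
  have gr: "\<And>u v. HE u v \<Longrightarrow> u \<in> HV \<and> v \<in> HV \<and> u \<noteq> v \<and> HE v u"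
    using assms(3) unfolding minor_model_def graph_def by blast
  have conn: "\<And>h. h \<in> HV \<Longrightarrow> \<beta> h \<subseteq> V \<and> connected_set E (\<beta> h)"
    using assms(3) unfolding minor_model_def by blast
  have ne: "\<And>h. h \<in> HV \<Longrightarrow> \<beta> h \<noteq> {}"
    using conn unfolding connected_set_def by blast
  have disj: "\<And>h h'. h \<in> HV \<Longrightarrow> h' \<in> HV \<Longrightarrow> h \<noteq> h' \<Longrightarrow> \<beta> h \<inter> \<beta> h' = {}"
    using assms(3) unfolding minor_model_def by blast
  have edge: "\<And>h h'. HE h h' \<Longrightarrow> \<exists>x\<in>\<beta> h. \<exists>y\<in>\<beta> h'. E x y"
    using assms(3) unfolding minor_model_def by blast
  have ABHV: "A \<union> B = HV" and ABd: "A \<inter> B = {}"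
    and bip: "\<And>u v. HE u v \<Longrightarrow> (u \<in> A \<and> v \<in> B) \<or> (u \<in> B \<and> v \<in> A)"
    and less: "|A| <o |B|" and inf: "\<And>b. b \<in> B \<Longrightarrow> infinite {a\<in>A. HE b a}"
    using assms(5) unfolding barricade_def by blast+
  have cnt: "\<And>h. h \<in> HV \<Longrightarrow> countable (\<beta> h)" using assms(4) by blast
  have Bne: "B \<noteq> {}" using less card_of_empty not_ordLess_ordLeq by blast
  then obtain b0 where "b0 \<in> B" by blast
  have "{a\<in>A. HE b0 a} \<subseteq> A" by blast
  with inf[OF \<open>b0 \<in> B\<close>] have Ainf: "infinite A" using finite_subset by blast

  define F where "F = {P. P \<subseteq> {(a,b). a\<in>A \<and> b\<in>B \<and> HE a b} \<and>
     (\<forall>p\<in>P. \<forall>q\<in>P. fst p = fst q \<longleftrightarrow> snd p = snd q)}"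
  have "\<forall>C\<in>chains F. \<Union>C \<in> F"
  proof
    fix C assume C: "C \<in> chains F"
    show "\<Union>C \<in> F" unfolding F_def
    proof (intro CollectI conjI ballI)
      show "\<Union>C \<subseteq> {(a,b). a\<in>A \<and> b\<in>B \<and> HE a b}"
        using C unfolding chains_def F_def by blast
    next
      fix p q assume "p \<in> \<Union>C" "q \<in> \<Union>C"
      then obtain P Q where PQ: "P \<in> C" "Q \<in> C" "p \<in> P" "q \<in> Q" by blast
      then have "P \<subseteq> Q \<or> Q \<subseteq> P" using C unfolding chains_def chain_subset_def by blast
      then obtain R where "R \<in> C" "p \<in> R" "q \<in> R" using PQ by blast
      then show "fst p = fst q \<longleftrightarrow> snd p = snd q" using C unfolding chains_def F_def by blast
    qed
  qed
  from Zorn_Lemma[OF this] obtain M where MF: "M \<in> F" and Mmax: "\<forall>X\<in>F. M \<subseteq> X \<longrightarrow> X = M"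
    by blast
  have Msub: "\<And>a b. (a,b) \<in> M \<Longrightarrow> a \<in> A \<and> b \<in> B \<and> HE a b" using MF unfolding F_def by blast
  have Minj: "\<And>a b a' b'. (a,b) \<in> M \<Longrightarrow> (a',b') \<in> M \<Longrightarrow> a = a' \<longleftrightarrow> b = b'"
    using MF unfolding F_def by fastforce
  have maxl: "a \<in> fst ` M" if "a \<in> A" "b \<in> B" "HE a b" "b \<notin> snd ` M" for a b
  proof (rule ccontr)
    assume na: "a \<notin> fst ` M"
    have "insert (a,b) M \<in> F" using MF that na unfolding F_def by (auto simp: image_iff)
    then have "insert (a,b) M = M" using Mmax by blast
    then show False using na by force
  qed

  define AS where "AS = (\<lambda>(a,b). \<beta> a \<union> \<beta> b) ` M"
  define B' where "B' = B - snd ` M"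
  define BS where "BS = \<beta> ` B'"
  define HE' where "HE' = (\<lambda>X Y. (X \<in> AS \<and> Y \<in> BS \<or> X \<in> BS \<and> Y \<in> AS) \<and> (\<exists>x\<in>X. \<exists>y\<in>Y. E x y))"
  have inA: "\<And>a. a \<in> A \<Longrightarrow> a \<in> HV" and inB: "\<And>b. b \<in> B \<Longrightarrow> b \<in> HV" using ABHV by blast+
  have ASBS: "AS \<inter> BS = {}"
  proof (rule ccontr)
    assume "AS \<inter> BS \<noteq> {}"
    then obtain a b' b where ab: "(a,b') \<in> M" "b \<in> B'" "\<beta> a \<union> \<beta> b' = \<beta> b"
      unfolding AS_def BS_def by auto
    then have "b \<noteq> b'" "b \<noteq> a" using ABd Msub unfolding B'_def by force+
    moreover have "b \<in> HV" "a \<in> HV" "b' \<in> HV" using ab Msub inA inB unfolding B'_def by auto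
    ultimately show False using disj ne ab(3) by (metis Int_Un_distrib Un_empty inf.idem)
  qed
  define HV' where "HV' = AS \<union> BS"
  have Xprop: "X \<subseteq> V \<and> connected_set E X \<and> countable X \<and> X \<inter> U \<noteq> {}" if HX: "X \<in> HV'" for X
  proof (cases "X \<in> AS")
    case True
    then obtain a b where ab: "(a,b) \<in> M" "X = \<beta> a \<union> \<beta> b" unfolding AS_def by auto
    have H: "a \<in> HV" "b \<in> HV" "HE a b" "b \<in> B" using Msub[OF ab(1)] inA inB by auto
    obtain x y where "x \<in> \<beta> a" "y \<in> \<beta> b" "E x y" using edge[OF H(3)] by blast
    then have "connected_set E X" using ab(2) conn H Egr conn_union by metis
    then show ?thesis using ab(2) conn H cnt assms(6) by auto
  next
    case False
    then obtain b where "b \<in> B" "X = \<beta> b" using HX unfolding HV'_def BS_def B'_def by auto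
    then show ?thesis using conn inB cnt assms(6) by auto
  qed
  have HE'sym: "\<And>X Y. HE' X Y \<Longrightarrow> X \<in> HV' \<and> Y \<in> HV' \<and> X \<noteq> Y \<and> HE' Y X"
    unfolding HE'_def HV'_def using ASBS Egr by blast
  have disj': "X \<inter> Y = {}" if "X \<in> HV'" "Y \<in> HV'" "X \<noteq> Y" for X Y
  proof -
    have c1: "X \<inter> Y = {}" if h: "X \<in> AS" "Y \<in> AS" "X \<noteq> Y" for X Y
    proof -
      obtain a b a' b' where ab: "(a,b) \<in> M" "X = \<beta> a \<union> \<beta> b" "(a',b') \<in> M" "Y = \<beta> a' \<union> \<beta> b'"
        using h unfolding AS_def by auto
      then have "a \<noteq> a'" "b \<noteq> b'" using Minj h(3) by blast+
      moreover have "a \<noteq> b'" "b \<noteq> a'" using ab Msub ABd by blast+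
      moreover have "a \<in> HV" "b \<in> HV" "a' \<in> HV" "b' \<in> HV" using ab Msub inA inB by auto
      ultimately show ?thesis using ab disj by blast
    qed
    have c2: "X \<inter> Y = {}" if h: "X \<in> AS" "Y \<in> BS" for X Y
    proof -
      obtain a b b2 where ab: "(a,b) \<in> M" "X = \<beta> a \<union> \<beta> b" "b2 \<in> B'" "Y = \<beta> b2"
        using h unfolding AS_def BS_def by auto
      then have "b \<noteq> b2" "a \<noteq> b2" using ABd Msub unfolding B'_def by force+
      moreover have "a \<in> HV" "b \<in> HV" "b2 \<in> HV" using ab Msub inA inB unfolding B'_def by auto
      ultimately show ?thesis using ab disj by blast
    qed
    have c3: "X \<inter> Y = {}" if "X \<in> BS" "Y \<in> BS" "X \<noteq> Y" for X Y
      using that disj inB unfolding BS_def B'_def by auto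
    show ?thesis using that c1 c2 c3 unfolding HV'_def by blast
  qed
  have mm: "minor_model V E HV' HE' id"
    unfolding minor_model_def
  proof (intro conjI)
    show "graph HV' HE'" unfolding graph_def using HE'sym by blast
    show "\<forall>h\<in>HV'. id h \<subseteq> V \<and> connected_set E (id h)" using Xprop by simp
    show "\<forall>h\<in>HV'. \<forall>h'\<in>HV'. h \<noteq> h' \<longrightarrow> id h \<inter> id h' = {}" using disj' by simp
    show "\<forall>h h'. HE' h h' \<longrightarrow> (\<exists>x\<in>id h. \<exists>y\<in>id h'. E x y)" unfolding HE'_def by simp
  qed
  have injM: "inj_on fst M" unfolding inj_on_def using Minj by fastforce
  have MA: "|M| \<le>o |A|" using card_of_ordLeq[of M A] injM Msub by fastforce
  have ASle: "|AS| \<le>o |A|" unfolding AS_def using card_of_image ordLeq_transitive MA by blast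
  have sMle: "|snd ` M| \<le>o |A|" using card_of_image ordLeq_transitive MA by blast
  have injB: "inj_on \<beta> B'" unfolding inj_on_def B'_def using disj ne inB
    by (metis DiffD1 inf.idem)
  have card_lt: "|AS| <o |BS|"
  proof (rule ccontr)
    assume "\<not> |AS| <o |BS|"
    then have "|BS| \<le>o |AS|" using ordLess_or_ordLeq card_of_Well_order by blast
    then have "|BS| \<le>o |A|" using ASle ordLeq_transitive by blast
    moreover have "|B'| \<le>o |BS|" unfolding BS_def using injB card_of_ordLeq[of B' "\<beta> ` B'"] by blast
    ultimately have "|B'| \<le>o |A|" using ordLeq_transitive by blast
    then have "|B' \<union> snd ` M| \<le>o |A|"
      using card_of_Un_ordLeq_infinite_Field[of "|A|" B' "snd ` M"] sMle Ainf card_of_Card_order[of A]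
      by (simp add: Field_card_of)
    moreover have "B \<subseteq> B' \<union> snd ` M" unfolding B'_def by blast
    ultimately have "|B| \<le>o |A|" using card_of_mono1 ordLeq_transitive by blast
    then show False using less not_ordLess_ordLeq by blast
  qed
  have infn: "infinite {X \<in> AS. HE' Y X}" if hY: "Y \<in> BS" for Y
  proof -
    obtain b where b: "b \<in> B'" "Y = \<beta> b" using hY unfolding BS_def by auto
    define P where "P = {p \<in> M. HE b (fst p)}"
    have "{a\<in>A. HE b a} \<subseteq> fst ` P"
    proof
      fix a assume a: "a \<in> {a\<in>A. HE b a}"
      then have "a \<in> fst ` M" using maxl[of a b] b gr unfolding B'_def by blast
      then show "a \<in> fst ` P" using a unfolding P_def by force
    qed
    then have "infinite P" using inf b(1) unfolding B'_def
      by (meson DiffD1 finite_imageI finite_subset)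
    moreover have "inj_on (\<lambda>(a,b). \<beta> a \<union> \<beta> b) P"
    proof (rule inj_onI)
      fix p q assume pq: "p \<in> P" "q \<in> P" "(\<lambda>(a,b). \<beta> a \<union> \<beta> b) p = (\<lambda>(a,b). \<beta> a \<union> \<beta> b) q"
      obtain a1 b1 a2 b2 where e: "p = (a1,b1)" "q = (a2,b2)" by force
      have M1: "(a1,b1) \<in> M" "(a2,b2) \<in> M" using pq e unfolding P_def by auto
      show "p = q"
      proof (rule ccontr)
        assume "p \<noteq> q"
        have "a1 \<noteq> a2" using \<open>p \<noteq> q\<close> e Minj M1 by blast
        have h: "a1 \<in> HV" "a2 \<in> HV" "b2 \<in> HV" using M1 Msub inA inB by blast+
        have "a1 \<noteq> b2" using M1 Msub ABd by blast
        then have "\<beta> a1 \<inter> (\<beta> a2 \<union> \<beta> b2) = {}"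
          using disj \<open>a1 \<noteq> a2\<close> h by blast
        moreover have "\<beta> a1 \<union> \<beta> b1 = \<beta> a2 \<union> \<beta> b2" using pq e by simp
        ultimately show False using ne h by blast
      qed
    qed
    ultimately have "infinite ((\<lambda>(a,b). \<beta> a \<union> \<beta> b) ` P)" using finite_imageD by blast
    moreover have "(\<lambda>(a,b). \<beta> a \<union> \<beta> b) ` P \<subseteq> {X \<in> AS. HE' Y X}"
    proof
      fix X assume "X \<in> (\<lambda>(a,b). \<beta> a \<union> \<beta> b) ` P"
      then obtain a b2 where ab: "(a,b2) \<in> M" "HE b a" "X = \<beta> a \<union> \<beta> b2" unfolding P_def by auto
      then have "X \<in> AS" unfolding AS_def by force
      moreover obtain x y where "x \<in> \<beta> b" "y \<in> \<beta> a" "E x y" using edge[OF ab(2)] by blast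
      ultimately show "X \<in> {X \<in> AS. HE' Y X}" unfolding HE'_def using hY b ab(3) by blast
    qed
    ultimately show ?thesis using finite_subset by blast
  qed
  have bar: "barricade HV' HE' AS BS"
    unfolding barricade_def
  proof (intro conjI allI impI ballI)
    show "graph HV' HE'" using mm unfolding minor_model_def by blast
    show "AS \<union> BS = HV'" unfolding HV'_def by simp
    show "AS \<inter> BS = {}" by (rule ASBS)
    show "|AS| <o |BS|" by (rule card_lt)
  next
    fix u v assume "HE' u v" then show "u \<in> AS \<and> v \<in> BS \<or> u \<in> BS \<and> v \<in> AS" unfolding HE'_def by blast
  next
    fix b assume "b \<in> BS" then show "infinite {a \<in> AS. HE' b a}" by (rule infn)
  qed
  show ?thesis
    apply (rule exI[of _ HV'], rule exI[of _ HE'], rule exI[of _ id])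
    using mm Xprop bar by (simp, blast)
qed

end
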